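(* Let $A,B\in\mathcal{M}_n$, let $\psi\colon H^*(M(A);\mathbb{Z})\to H^*(M(B);\mathbb{Z})$ be a graded ring isomorphism (also denoting its rationalization by $\psi$), and let $\sigma$ be a permutation of $\{1,\dots,n\}$ and $q_1,\dots,q_n$ nonzero rationals with $\psi(y^A_j)=q_jy^B_{\sigma(j)}$ for all $j$. Fix $j\in\{1,\dots,n\}$ and suppose $a\in\mathbb{Z}\setminus\{0\}$, $u\in H^2(M(B);\mathbb{Z})$ and $k\in\{1,\dots,n\}$ satisfy $u(u+a\alpha^B_k)=0$ and $\mathrm{ht}(u)<k$. (i) If $(\psi(x^A_j),\psi(x^A_j-\alpha^A_j))=(ax^B_k+u,\ a(x^B_k-\alpha^B_k)-u)$, then $q_j=a$, $k=\sigma(j)$, and $a^i_j=0$ for every $i$ with $\sigma(i)>\sigma(j)$. (ii) If $(\psi(x^A_j),\psi(x^A_j-\alpha^A_j))=(ax^B_k+u,\ -a(x^B_k-\alpha^B_k)+u)$, then $\alpha^A_j=2aq_i^{-1}y^A_i$ for some $i<j$.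
   Context: Let $\mathcal{M}_n$ be the set of integral strictly upper triangular $n\times n$ matrices $A=(A^i_j)$ ($A^i_j$ is the $(i,j)$ entry, and $A^i_j=0$ for $i\ge j$). For $A\in\mathcal{M}_n$, $M(A)$ denotes the Bott manifold obtained as the quotient of $(S^3)^n$ ($S^3\subset\mathbb{C}^2$ the unit sphere) by the free $(S^1)^n$-action $(g_1,\dots,g_n)\cdot((z_1,w_1),\dots,(z_n,w_n))=\big(((\prod_{k<j}g_k^{-A^k_j})g_jz_j,\ g_jw_j)\big)_{j=1}^n$. Let $x^A_j\in H^2(M(A);\mathbb{Z})$ be the first Chern class of the line bundle obtained as the quotient of $(S^3)^n\times\mathbb{C}$ where $g$ acts on the $\mathbb{C}$-factor by $g_j^{-1}$. Put $\alpha^A_j=\sum_{i<j}A^i_jx^A_i$. Then $H^*(M(A);\mathbb{Z})=\mathbb{Z}[x^A_1,\dots,x^A_n]/((x^A_j)^2-\alpha^A_jx^A_j\mid j=1,\dots,n)$. Define $y^A_j=x^A_j-\tfrac12\alpha^A_j\in H^2(M(A);\mathbb{Q})$. Let $a^i_j$ denote the $(i,j)$ entry of the matrix $(E-\tfrac12A)^{-1}$ ($E$ the identity matrix), so that $x^A_j=\sum_{i\le j}a^i_jy^A_i$. The same notation is used for $B$. For $v=\sum_i c_ix^B_i\in H^2(M(B);\mathbb{Z})$, the height $\mathrm{ht}(v)$ is $\max\{i\mid c_i\neq0\}$ (taken to be $0$ if $v=0$). *)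

theory Defs
  imports Complex_Main "HOL-Library.Poly_Mapping" "HOL-Combinatorics.Permutations"
begin

type_synonym ipoly = "(nat \<Rightarrow>\<^sub>0 nat) \<Rightarrow>\<^sub>0 int"

text \<open>The variable x_i (a monomial is a finitely supported exponent vector).\<close>
definition X :: "nat \<Rightarrow> ipoly" where
  "X i = Poly_Mapping.single (Poly_Mapping.single i 1) 1"

definition PolyN :: "nat \<Rightarrow> ipoly set" where
  "PolyN n = {p. \<forall>m \<in> Poly_Mapping.keys p. Poly_Mapping.keys m \<subseteq> {1..n}}"

text \<open>Homogeneous of polynomial degree d (cohomological degree 2d).\<close>
definition homog :: "nat \<Rightarrow> ipoly \<Rightarrow> bool" where
  "homog d p \<longleftrightarrow> (\<forall>m \<in> Poly_Mapping.keys p. (\<Sum>i\<in>Poly_Mapping.keys m. Poly_Mapping.lookup m i) = d)"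

definition lin :: "ipoly \<Rightarrow> nat \<Rightarrow> int" where
  "lin p k = Poly_Mapping.lookup p (Poly_Mapping.single k 1)"

text \<open>A in M_n: integral strictly upper triangular n x n matrix, entries A i j,
  indices 1..n (entries outside are 0).\<close>
definition bott_matrix :: "nat \<Rightarrow> (nat \<Rightarrow> nat \<Rightarrow> int) \<Rightarrow> bool" where
  "bott_matrix n A \<longleftrightarrow> (\<forall>i j. (i \<notin> {1..n} \<or> j \<notin> {1..n} \<or> j \<le> i) \<longrightarrow> A i j = 0)"

definition alpha :: "(nat \<Rightarrow> nat \<Rightarrow> int) \<Rightarrow> nat \<Rightarrow> ipoly" where
  "alpha A j = (\<Sum>i\<in>{1..<j}. Poly_Mapping.single (Poly_Mapping.single i 1) (A i j))"

text \<open>The ideal of Z[x_1..x_n] generated by x_j^2 - alpha_j x_j, j = 1..n;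
  H^*(M(A);Z) = Z[x_1..x_n] / bott_ideal n A, with x^A_j the class of X j.\<close>
definition bott_ideal :: "nat \<Rightarrow> (nat \<Rightarrow> nat \<Rightarrow> int) \<Rightarrow> ipoly set" where
  "bott_ideal n A = {p. \<exists>c. (\<forall>j. c j \<in> PolyN n) \<and>
      p = (\<Sum>j\<in>{1..n}. c j * (X j ^ 2 - alpha A j * X j))}"

text \<open>A graded ring isomorphism psi : H^*(M(A);Z) -> H^*(M(B);Z), given by a map f on
  representatives (f p represents psi [p]).\<close>
definition graded_ring_iso ::
  "nat \<Rightarrow> (nat \<Rightarrow> nat \<Rightarrow> int) \<Rightarrow> (nat \<Rightarrow> nat \<Rightarrow> int) \<Rightarrow> (ipoly \<Rightarrow> ipoly) \<Rightarrow> bool" where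
  "graded_ring_iso n A B f \<longleftrightarrow>
     (\<forall>p \<in> PolyN n. f p \<in> PolyN n) \<and>
     (\<forall>p \<in> PolyN n. \<forall>p' \<in> PolyN n. p - p' \<in> bott_ideal n A \<longrightarrow> f p - f p' \<in> bott_ideal n B) \<and>
     (\<forall>p \<in> PolyN n. \<forall>p' \<in> PolyN n. f (p + p') - (f p + f p') \<in> bott_ideal n B) \<and>
     (\<forall>p \<in> PolyN n. \<forall>p' \<in> PolyN n. f (p * p') - f p * f p' \<in> bott_ideal n B) \<and>
     f 1 - 1 \<in> bott_ideal n B \<and>
     (\<forall>p \<in> PolyN n. f p \<in> bott_ideal n B \<longrightarrow> p \<in> bott_ideal n A) \<and>
     (\<forall>q \<in> PolyN n. \<exists>p \<in> PolyN n. f p - q \<in> bott_ideal n B) \<and>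
     (\<forall>d. \<forall>p \<in> PolyN n. homog d p \<longrightarrow>
        (\<exists>p' \<in> PolyN n. homog d p' \<and> f p - p' \<in> bott_ideal n B))"

text \<open>H^2(M(B);Z): homogeneous linear polynomials in x_1..x_n (no relations in degree 2).\<close>
definition H2 :: "nat \<Rightarrow> ipoly set" where
  "H2 n = {p \<in> PolyN n. homog 1 p}"

definition ht :: "ipoly \<Rightarrow> nat" where
  "ht v = Max ({i. lin v i \<noteq> 0} \<union> {0})"

text \<open>Vectors of H^2(M(A);Q) are written in coordinates w.r.t. the basis x^A_1..x^A_n.
  y^A_j = x^A_j - alpha^A_j / 2:\<close>
definition yvec :: "(nat \<Rightarrow> nat \<Rightarrow> int) \<Rightarrow> nat \<Rightarrow> nat \<Rightarrow> rat" where
  "yvec A j k = (if k = j then 1 else if k \<in> {1..<j} then - of_int (A k j) / 2 else 0)"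

definition alphavec :: "(nat \<Rightarrow> nat \<Rightarrow> int) \<Rightarrow> nat \<Rightarrow> nat \<Rightarrow> rat" where
  "alphavec A j k = (if k \<in> {1..<j} then of_int (A k j) else 0)"

text \<open>Rationalization of psi on H^2: psi(x^A_i) = sum_k (lin (f (X i)) k) x^B_k.\<close>
definition psiQ :: "nat \<Rightarrow> (ipoly \<Rightarrow> ipoly) \<Rightarrow> (nat \<Rightarrow> rat) \<Rightarrow> nat \<Rightarrow> rat" where
  "psiQ n f v k = (\<Sum>i\<in>{1..n}. v i * of_int (lin (f (X i)) k))"

text \<open>The entries a^i_j of (E - A/2)^{-1}.\<close>
definition ainv :: "nat \<Rightarrow> (nat \<Rightarrow> nat \<Rightarrow> int) \<Rightarrow> nat \<Rightarrow> nat \<Rightarrow> rat" where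
  "ainv n A = (THE N. (\<forall>i j. (i \<notin> {1..n} \<or> j \<notin> {1..n}) \<longrightarrow> N i j = 0) \<and>
     (\<forall>i\<in>{1..n}. \<forall>j\<in>{1..n}.
        (\<Sum>k\<in>{1..n}. ((if i = k then 1 else 0) - of_int (A i k) / 2) * N k j)
          = (if i = j then 1 else 0)))"

end

theory Submission
  imports Defs
begin


definition hi :: "ipoly \<Rightarrow> bool" where
  "hi g \<longleftrightarrow> (\<forall>b\<in>Poly_Mapping.keys g. b \<noteq> 0 \<and> (\<forall>l. b \<noteq> Poly_Mapping.single l 1))"

lemma sum_single_cases:
  fixes a b :: "nat \<Rightarrow>\<^sub>0 nat"
  assumes "a + b = Poly_Mapping.single l 1"
  shows "b = 0 \<or> b = Poly_Mapping.single l 1"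
proof -
  have le: "Poly_Mapping.lookup b x \<le> Poly_Mapping.lookup (Poly_Mapping.single l 1) x" for x
    using assms by (metis le_add2 lookup_add)
  have z: "Poly_Mapping.lookup b x = 0" if "x \<noteq> l" for x
    using le[of x] that by (simp add: lookup_single_not_eq)
  show ?thesis
  proof (cases "Poly_Mapping.lookup b l = 0")
    case True
    then have "b = 0" using z by (metis lookup_zero poly_mapping_eqI)
    then show ?thesis by simp
  next
    case False
    with le[of l] have "Poly_Mapping.lookup b l = 1" by simp
    then have "b = Poly_Mapping.single l 1"
      by (intro poly_mapping_eqI) (metis z lookup_single_eq lookup_single_not_eq)
    then show ?thesis by simp
  qed
qed

lemma sum_zero_cases:
  fixes a b :: "nat \<Rightarrow>\<^sub>0 nat"
  assumes "a + b = 0" shows "b = 0"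
  using assms by (metis add_is_0 lookup_add lookup_zero poly_mapping_eqI)

lemma hi_mult: "hi g \<Longrightarrow> hi (c * g)"
  unfolding hi_def
proof (intro ballI conjI allI)
  fix m assume h: "\<forall>b\<in>Poly_Mapping.keys g. b \<noteq> 0 \<and> (\<forall>l. b \<noteq> Poly_Mapping.single l 1)"
    and m: "m \<in> Poly_Mapping.keys (c * g)"
  then obtain a b where ab: "m = a + b" "b \<in> Poly_Mapping.keys g" using keys_mult by blast
  have b: "b \<noteq> 0" "\<And>l. b \<noteq> Poly_Mapping.single l 1" using ab(2) h by auto
  show "m \<noteq> 0" using sum_zero_cases[of a b] ab(1) b by auto
  fix l show "m \<noteq> Poly_Mapping.single l 1" using sum_single_cases[of a b l] ab(1) b by auto
qed

lemma hi_add: assumes "hi g" "hi h" shows "hi (g + h)"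
  unfolding hi_def
proof
  fix m assume "m \<in> Poly_Mapping.keys (g + h)"
  then have "m \<in> Poly_Mapping.keys g \<or> m \<in> Poly_Mapping.keys h" using keys_add[of g h] by auto
  then show "m \<noteq> 0 \<and> (\<forall>l. m \<noteq> Poly_Mapping.single l 1)" using assms unfolding hi_def by auto
qed

lemma hi_diff: assumes "hi g" "hi h" shows "hi (g - h)"
  unfolding hi_def
proof
  fix m assume "m \<in> Poly_Mapping.keys (g - h)"
  then have "m \<in> Poly_Mapping.keys g \<or> m \<in> Poly_Mapping.keys h" using keys_diff[of g h] by auto
  then show "m \<noteq> 0 \<and> (\<forall>l. m \<noteq> Poly_Mapping.single l 1)" using assms unfolding hi_def by auto
qed

lemma hi_zero: "hi 0" unfolding hi_def by simp

lemma hi_sum: "(\<And>i. i \<in> S \<Longrightarrow> hi (g i)) \<Longrightarrow> hi (\<Sum>i\<in>S. g i)"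
  by (induction S rule: infinite_finite_induct) (auto simp: hi_zero hi_add)

lemma hi_single: "m \<noteq> 0 \<Longrightarrow> (\<forall>l. m \<noteq> Poly_Mapping.single l 1) \<Longrightarrow> hi (Poly_Mapping.single m c)"
  unfolding hi_def by simp

lemma two_single_ne:
  "Poly_Mapping.single i 1 + Poly_Mapping.single j 1 \<noteq> (0::nat\<Rightarrow>\<^sub>0nat)"
  "Poly_Mapping.single i 1 + Poly_Mapping.single j 1 \<noteq> (Poly_Mapping.single l 1::nat\<Rightarrow>\<^sub>0nat)"
proof -
  show "Poly_Mapping.single i 1 + Poly_Mapping.single j 1 \<noteq> (0::nat\<Rightarrow>\<^sub>0nat)"
    by (metis lookup_add lookup_single_eq lookup_zero add_is_0 one_neq_zero)
  show "Poly_Mapping.single i 1 + Poly_Mapping.single j 1 \<noteq> (Poly_Mapping.single l 1::nat\<Rightarrow>\<^sub>0nat)"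
  proof
    assume e: "Poly_Mapping.single i 1 + Poly_Mapping.single j 1 = (Poly_Mapping.single l 1::nat\<Rightarrow>\<^sub>0nat)"
    have "Poly_Mapping.lookup (Poly_Mapping.single i 1 + Poly_Mapping.single j 1) x = Poly_Mapping.lookup (Poly_Mapping.single l 1::nat\<Rightarrow>\<^sub>0nat) x" for x
      using e by simp
    then have "(1 when i = x) + (1 when j = x) = ((1::nat) when l = x)" for x
      by (simp add: lookup_add lookup_single)
    from this[of i] this[of j] show False
      by (cases "i = j"; cases "l = i"; cases "l = j"; simp)
  qed
qed

lemma hi_rel: "hi (X j ^ 2 - alpha A j * X j)"
proof (rule hi_diff)
  show "hi (X j ^ 2)"
    unfolding X_def power2_eq_square mult_single by (intro hi_single two_single_ne allI)
  have "alpha A j * X j = (\<Sum>i\<in>{1..<j}. Poly_Mapping.single (Poly_Mapping.single i 1 + Poly_Mapping.single j 1) (A i j))"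
    by (simp add: alpha_def X_def sum_distrib_right mult_single)
  then show "hi (alpha A j * X j)"
    by (metis (no_types, lifting) hi_sum hi_single two_single_ne)
qed

lemma hi_ideal: "p \<in> bott_ideal n A \<Longrightarrow> hi p"
  unfolding bott_ideal_def by (auto intro!: hi_sum hi_mult hi_rel)

lemma hi_lin: "hi p \<Longrightarrow> lin p l = 0"
  unfolding hi_def lin_def by (auto simp: in_keys_iff)

lemma ideal_lin: "p \<in> bott_ideal n A \<Longrightarrow> lin p l = 0"
  using hi_ideal hi_lin by blast

lemma lin_add: "lin (p + q) l = lin p l + lin q l"
  by (simp add: lin_def lookup_add)
lemma lin_diff: "lin (p - q) l = lin p l - lin q l"
  by (simp add: lin_def lookup_minus)
lemma lin_uminus: "lin (- p) l = - lin p l"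
  by (simp add: lin_def)

lemma lin_eq: "p - q \<in> bott_ideal n A \<Longrightarrow> lin p l = lin q l"
  using ideal_lin[of "p - q"] lin_diff by fastforce

lemma single_single_eq: "(Poly_Mapping.single i (1::nat) = Poly_Mapping.single l 1) = (i = l)"
  by (metis lookup_single_eq lookup_single_not_eq zero_neq_one)

lemma single_single_eq': "(Poly_Mapping.single i (Suc 0) = Poly_Mapping.single l (Suc 0)) = (i = l)"
  using single_single_eq by simp

lemma lin_single: "lin (Poly_Mapping.single (Poly_Mapping.single i 1) c) l = (if i = l then c else 0)"
  by (simp add: lin_def lookup_single single_single_eq single_single_eq' when_def)

lemma lin_single': "lin (Poly_Mapping.single (Poly_Mapping.single i (Suc 0)) c) l = (if i = l then c else 0)"
  using lin_single[of i c l] by simp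

lemma lin_aX: "lin (Poly_Mapping.single 0 a * X k) l = (if k = l then a else 0)"
  by (simp add: X_def mult_single lin_single lin_single')

lemma lin_alpha: "lin (alpha B k) l = (if l \<in> {1..<k} then B l k else 0)"
  by (simp add: alpha_def lin_def lookup_sum lookup_single single_single_eq single_single_eq' when_def)




lemma PolyN_zero: "0 \<in> PolyN n" by (simp add: PolyN_def)
lemma PolyN_add: assumes "p \<in> PolyN n" "q \<in> PolyN n" shows "p + q \<in> PolyN n"
  unfolding PolyN_def
proof (intro CollectI ballI)
  fix m assume "m \<in> Poly_Mapping.keys (p + q)"
  then have "m \<in> Poly_Mapping.keys p \<or> m \<in> Poly_Mapping.keys q" using keys_add[of p q] by auto
  then show "Poly_Mapping.keys m \<subseteq> {1..n}" using assms unfolding PolyN_def by auto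
qed
lemma PolyN_diff: assumes "p \<in> PolyN n" "q \<in> PolyN n" shows "p - q \<in> PolyN n"
  unfolding PolyN_def
proof (intro CollectI ballI)
  fix m assume "m \<in> Poly_Mapping.keys (p - q)"
  then have "m \<in> Poly_Mapping.keys p \<or> m \<in> Poly_Mapping.keys q" using keys_diff[of p q] by auto
  then show "Poly_Mapping.keys m \<subseteq> {1..n}" using assms unfolding PolyN_def by auto
qed
lemma PolyN_uminus: "p \<in> PolyN n \<Longrightarrow> - p \<in> PolyN n"
  unfolding PolyN_def by simp
lemma PolyN_single: "i \<in> {1..n} \<Longrightarrow> Poly_Mapping.single (Poly_Mapping.single i 1) c \<in> PolyN n"
  unfolding PolyN_def by simp
lemma PolyN_X: "i \<in> {1..n} \<Longrightarrow> X i \<in> PolyN n"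
  unfolding X_def by (rule PolyN_single)
lemma PolyN_sum: "(\<And>i. i \<in> S \<Longrightarrow> g i \<in> PolyN n) \<Longrightarrow> (\<Sum>i\<in>S. g i) \<in> PolyN n"
  by (induction S rule: infinite_finite_induct) (auto simp: PolyN_zero PolyN_add)
lemma PolyN_alpha: "j \<in> {1..n} \<Longrightarrow> alpha A j \<in> PolyN n"
  unfolding alpha_def by (rule PolyN_sum, rule PolyN_single) auto

locale isoctx =
  fixes n :: nat and A B :: "nat \<Rightarrow> nat \<Rightarrow> int" and f :: "ipoly \<Rightarrow> ipoly"
  assumes iso: "graded_ring_iso n A B f"
begin

lemma g_add: "p \<in> PolyN n \<Longrightarrow> q \<in> PolyN n \<Longrightarrow> lin (f (p + q)) l = lin (f p) l + lin (f q) l"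
  using iso unfolding graded_ring_iso_def using lin_eq lin_add by metis

lemma g_zero: "lin (f 0) l = 0"
  using g_add[OF PolyN_zero PolyN_zero, of l] by simp

lemma g_uminus: "p \<in> PolyN n \<Longrightarrow> lin (f (- p)) l = - lin (f p) l"
  using g_add[OF PolyN_uminus, of p p l] g_zero by simp

lemma g_diff: "p \<in> PolyN n \<Longrightarrow> q \<in> PolyN n \<Longrightarrow> lin (f (p - q)) l = lin (f p) l - lin (f q) l"
  using g_add[OF _ PolyN_uminus, of p q l] g_uminus[of q l] by simp

lemma g_single_nat: "i \<in> {1..n} \<Longrightarrow> lin (f (Poly_Mapping.single (Poly_Mapping.single i 1) (int m))) l = int m * lin (f (X i)) l"
proof (induction m)
  case 0 then show ?case by (simp add: g_zero)
next
  case (Suc m)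
  have "Poly_Mapping.single (Poly_Mapping.single i 1) (int (Suc m)) =
        Poly_Mapping.single (Poly_Mapping.single i 1) (int m) + X i"
    by (simp add: X_def single_add)
  then show ?case using Suc g_add[OF PolyN_single PolyN_X, of i i "int m" l] by (simp add: algebra_simps)
qed

lemma g_single: assumes i: "i \<in> {1..n}" shows "lin (f (Poly_Mapping.single (Poly_Mapping.single i 1) c)) l = c * lin (f (X i)) l"
proof (cases "c \<ge> 0")
  case True
  define m where "m = nat c"
  have "c = int m" using True by (simp add: m_def)
  then show ?thesis using g_single_nat[OF i] by simp
next
  case False
  define m where "m = nat (- c)"
  have m: "c = - int m" using False by (simp add: m_def)
  have "lin (f (Poly_Mapping.single (Poly_Mapping.single i 1) c)) l
      = lin (f (- Poly_Mapping.single (Poly_Mapping.single i 1) (int m))) l"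
    by (simp add: m single_uminus)
  also have "\<dots> = - (int m * lin (f (X i)) l)"
    using g_uminus[OF PolyN_single[OF i]] g_single_nat[OF i] by simp
  finally show ?thesis by (simp add: m)
qed

lemma g_lincomb:
  assumes "finite S" "S \<subseteq> {1..n}"
  shows "lin (f (\<Sum>i\<in>S. Poly_Mapping.single (Poly_Mapping.single i 1) (c i))) l = (\<Sum>i\<in>S. c i * lin (f (X i)) l)"
  using assms
proof (induction S rule: finite_induct)
  case empty then show ?case by (simp add: g_zero)
next
  case (insert x S)
  have "lin (f (\<Sum>i\<in>insert x S. Poly_Mapping.single (Poly_Mapping.single i 1) (c i))) l
     = lin (f (Poly_Mapping.single (Poly_Mapping.single x 1) (c x) + (\<Sum>i\<in>S. Poly_Mapping.single (Poly_Mapping.single i 1) (c i)))) l"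
    using insert by simp
  also have "\<dots> = c x * lin (f (X x)) l + (\<Sum>i\<in>S. c i * lin (f (X i)) l)"
  proof -
    have x: "x \<in> {1..n}" using insert by auto
    have PS: "(\<Sum>i\<in>S. Poly_Mapping.single (Poly_Mapping.single i 1) (c i)) \<in> PolyN n"
      by (rule PolyN_sum, rule PolyN_single) (use insert in auto)
    show ?thesis
      using g_add[OF PolyN_single[OF x] PS] g_single[OF x] insert.IH insert.prems by simp
  qed
  finally show ?case using insert by simp
qed

lemma g_alpha: "j \<in> {1..n} \<Longrightarrow> lin (f (alpha A' j)) l = (\<Sum>i\<in>{1..<j}. A' i j * lin (f (X i)) l)"
  unfolding alpha_def by (rule g_lincomb) auto

end



lemma lin_cmult: "lin (Poly_Mapping.single 0 a * p) l = a * lin p l"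
  by (simp add: lin_def map.rep_eq when_def flip: mult_map_scale_conv_mult)

function Nrec :: "nat \<Rightarrow> (nat \<Rightarrow> nat \<Rightarrow> int) \<Rightarrow> nat \<Rightarrow> nat \<Rightarrow> rat" where
 "Nrec n A i j = (if i \<in> {1..n} \<and> j \<in> {1..n} then (if i = j then 1 else 0)
     + (\<Sum>k\<in>{i<..n}. of_int (A i k) / 2 * Nrec n A k j) else 0)"
  by auto
termination by (relation "measure (\<lambda>(n,A,i,j). n - i)") auto

declare Nrec.simps[simp del]

definition Pinv :: "nat \<Rightarrow> (nat \<Rightarrow> nat \<Rightarrow> int) \<Rightarrow> (nat \<Rightarrow> nat \<Rightarrow> rat) \<Rightarrow> bool" where
  "Pinv n A N \<longleftrightarrow> (\<forall>i j. (i \<notin> {1..n} \<or> j \<notin> {1..n}) \<longrightarrow> N i j = 0) \<and>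
     (\<forall>i\<in>{1..n}. \<forall>j\<in>{1..n}.
        (\<Sum>k\<in>{1..n}. ((if i = k then 1 else 0) - of_int (A i k) / 2) * N k j)
          = (if i = j then 1 else 0))"

lemma ainv_alt: "ainv n A = (THE N. Pinv n A N)"
  unfolding ainv_def Pinv_def by simp

lemma sum_split:
  fixes N :: "nat \<Rightarrow> nat \<Rightarrow> rat"
  assumes A: "bott_matrix n A" and i: "i \<in> {1..n}"
  shows "(\<Sum>k\<in>{1..n}. ((if i = k then 1 else 0) - of_int (A i k) / 2) * N k j)
       = N i j - (\<Sum>k\<in>{i<..n}. of_int (A i k) / 2 * N k j)"
proof -
  have "(\<Sum>k\<in>{1..n}. ((if i = k then 1 else 0) - of_int (A i k) / 2) * N k j)
      = (\<Sum>k\<in>{1..n}. (if i = k then N k j else 0)) - (\<Sum>k\<in>{1..n}. of_int (A i k) / 2 * N k j)"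
  proof -
    have "(\<Sum>k\<in>{1..n}. ((if i = k then 1 else 0) - of_int (A i k) / 2) * N k j)
        = (\<Sum>k\<in>{1..n}. (if i = k then N k j else 0) - of_int (A i k) / 2 * N k j)"
      by (intro sum.cong) (auto simp: algebra_simps)
    then show ?thesis by (simp only: sum_subtractf)
  qed
  also have "(\<Sum>k\<in>{1..n}. (if i = k then N k j else 0)) = N i j" using i by simp
  also have "(\<Sum>k\<in>{1..n}. of_int (A i k) / 2 * N k j) = (\<Sum>k\<in>{i<..n}. of_int (A i k) / 2 * N k j)"
  proof (rule sum.mono_neutral_right)
    show "{i<..n} \<subseteq> {1..n}" using i by auto
    show "\<forall>k\<in>{1..n} - {i<..n}. of_int (A i k) / 2 * N k j = 0"
      using A unfolding bott_matrix_def by auto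
  qed auto
  finally show ?thesis .
qed

lemma Pinv_Nrec: assumes A: "bott_matrix n A" shows "Pinv n A (Nrec n A)"
  unfolding Pinv_def
proof (intro conjI allI impI ballI)
  fix i j assume "i \<notin> {1..n} \<or> j \<notin> {1..n}"
  then show "Nrec n A i j = 0" by (subst Nrec.simps) auto
next
  fix i j assume i: "i \<in> {1..n}" and j: "j \<in> {1..n}"
  show "(\<Sum>k\<in>{1..n}. ((if i = k then 1 else 0) - of_int (A i k) / 2) * Nrec n A k j) = (if i = j then 1 else 0)"
  proof -
    have "Nrec n A i j = (if i = j then 1 else 0) + (\<Sum>k\<in>{i<..n}. of_int (A i k) / 2 * Nrec n A k j)"
      using i j by (subst Nrec.simps) simp
    then show ?thesis unfolding sum_split[OF A i] by simp
  qed
qed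

lemma Pinv_unique:
  assumes A: "bott_matrix n A" and P: "Pinv n A N"
  shows "N = Nrec n A"
proof -
  have rec: "N i j = (if i = j then 1 else 0) + (\<Sum>k\<in>{i<..n}. of_int (A i k) / 2 * N k j)"
    if i: "i \<in> {1..n}" and j: "j \<in> {1..n}" for i j
    using P i j sum_split[OF A i, of N j] unfolding Pinv_def by auto
  have main: "\<forall>i. n - i \<le> d \<longrightarrow> N i j = Nrec n A i j" for d j
  proof (induction d)
    case 0
    show ?case
    proof (intro allI impI)
      fix i assume "n - i \<le> 0"
      show "N i j = Nrec n A i j"
      proof (cases "i \<in> {1..n} \<and> j \<in> {1..n}")
        case True
        then have "i = n" using \<open>n - i \<le> 0\<close> by auto
        then show ?thesis using True rec[of i j] by (subst Nrec.simps) simp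
      next
        case False
        then show ?thesis using P unfolding Pinv_def by (subst Nrec.simps) auto
      qed
    qed
  next
    case (Suc d)
    show ?case
    proof (intro allI impI)
      fix i assume d: "n - i \<le> Suc d"
      show "N i j = Nrec n A i j"
      proof (cases "i \<in> {1..n} \<and> j \<in> {1..n}")
        case True
        have "(\<Sum>k\<in>{i<..n}. of_int (A i k) / 2 * N k j) = (\<Sum>k\<in>{i<..n}. of_int (A i k) / 2 * Nrec n A k j)"
          using Suc.IH d by (intro sum.cong) auto
        then show ?thesis using True rec[of i j] by (subst Nrec.simps) simp
      next
        case False
        then show ?thesis using P unfolding Pinv_def by (subst Nrec.simps) auto
      qed
    qed
  qed
  show ?thesis using main[of n] by (intro ext) auto
qed

lemma ainv_Nrec: assumes A: "bott_matrix n A" shows "ainv n A = Nrec n A"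
  unfolding ainv_alt
  by (rule the_equality[where P="Pinv n A", OF Pinv_Nrec[OF A]]) (rule Pinv_unique[OF A])

lemma Pinv_ainv: assumes A: "bott_matrix n A" shows "Pinv n A (ainv n A)"
  using ainv_Nrec[OF A] Pinv_Nrec[OF A] by simp

lemma yvec_in: assumes A: "bott_matrix n A" and i: "i \<in> {1..n}" and l: "l \<in> {1..n}"
  shows "yvec A i l = (if l = i then 1 else 0) - of_int (A l i) / 2"
  using A i l unfolding yvec_def bott_matrix_def by auto

lemma yvec_out: assumes i: "i \<in> {1..n}" and l: "l \<notin> {1..n}"
  shows "yvec A i l = 0"
  using i l unfolding yvec_def by auto

lemma column:
  assumes A: "bott_matrix n A" and m: "m \<in> {1..n}"
  shows "(\<Sum>i\<in>{1..n}. ainv n A i m * yvec A i l) = (if l = m then 1 else 0)"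
proof (cases "l \<in> {1..n}")
  case True
  have "(\<Sum>i\<in>{1..n}. ainv n A i m * yvec A i l)
      = (\<Sum>i\<in>{1..n}. ((if l = i then 1 else 0) - of_int (A l i) / 2) * ainv n A i m)"
    using yvec_in[OF A _ True] by (intro sum.cong) (auto simp: mult.commute)
  also have "\<dots> = (if l = m then 1 else 0)"
    using Pinv_ainv[OF A] True m unfolding Pinv_def by blast
  finally show ?thesis .
next
  case False
  then show ?thesis using yvec_out[OF _ False] m by auto
qed

lemma expand:
  assumes A: "bott_matrix n A" and v: "\<forall>l. l \<notin> {1..n} \<longrightarrow> v l = 0"
  shows "v l = (\<Sum>i\<in>{1..n}. (\<Sum>m\<in>{1..n}. v m * ainv n A i m) * yvec A i l)"
proof -
  have "(\<Sum>i\<in>{1..n}. (\<Sum>m\<in>{1..n}. v m * ainv n A i m) * yvec A i l)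
      = (\<Sum>m\<in>{1..n}. v m * (\<Sum>i\<in>{1..n}. ainv n A i m * yvec A i l))"
    unfolding sum_distrib_left sum_distrib_right mult.assoc by (rule sum.swap)
  also have "\<dots> = (\<Sum>m\<in>{1..n}. v m * (if l = m then 1 else 0))"
    using column[OF A] by (intro sum.cong) auto
  also have "\<dots> = (\<Sum>m\<in>{1..n}. if m = l then v m else 0)" by (intro sum.cong) auto
  also have "\<dots> = v l" using v by (cases "l \<in> {1..n}") auto
  finally show ?thesis by simp
qed

lemma indep:
  assumes sigma: "\<sigma> permutes {1..n}"
    and h: "\<forall>l. t < l \<and> l \<le> n \<longrightarrow> (\<Sum>i\<in>{1..n}. d i * yvec B (\<sigma> i) l) = 0"
  shows "\<forall>i\<in>{1..n}. \<sigma> i > t \<longrightarrow> d i = 0"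
proof -
  have img: "\<sigma> i \<in> {1..n}" if "i \<in> {1..n}" for i
    using sigma that by (meson permutes_in_image)
  have inj: "inj \<sigma>" using sigma permutes_inj by blast
  have main: "\<forall>i\<in>{1..n}. \<sigma> i > t \<and> \<sigma> i + r > n \<longrightarrow> d i = 0" for r
  proof (induction r)
    case 0 then show ?case using img by fastforce
  next
    case (Suc r)
    show ?case
    proof (intro ballI impI)
      fix i0 assume i0: "i0 \<in> {1..n}" and c: "t < \<sigma> i0 \<and> n < \<sigma> i0 + Suc r"
      show "d i0 = 0"
      proof (cases "n < \<sigma> i0 + r")
        case True then show ?thesis using Suc.IH i0 c by blast
      next
        case False
        define s where "s = \<sigma> i0"
        have s: "t < s" "s \<le> n" using c img[OF i0] s_def by auto
        have "(\<Sum>i\<in>{1..n}. d i * yvec B (\<sigma> i) s) = (\<Sum>i\<in>{1..n}. if i = i0 then d i else 0)"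
        proof (rule sum.cong)
          fix i assume i: "i \<in> {1..n}"
          show "d i * yvec B (\<sigma> i) s = (if i = i0 then d i else 0)"
          proof (cases "i = i0")
            case True then show ?thesis by (simp add: s_def yvec_def)
          next
            case ne: False
            then have ne': "\<sigma> i \<noteq> s" using inj s_def by (metis injD)
            show ?thesis
            proof (cases "\<sigma> i < s")
              case True then show ?thesis using ne ne' by (simp add: yvec_def)
            next
              case False
              then have "\<sigma> i > s" using ne' by simp
              then have "d i = 0" using Suc.IH i s False \<open>\<not> n < \<sigma> i0 + r\<close> c s_def by auto
              then show ?thesis using ne by simp
            qed
          qed
        qed simp
        also have "\<dots> = d i0" using i0 by simp
        finally show ?thesis using h s by simp
      qed
    qed
  qed
  show ?thesis using main[of "n+1"] by auto
qed




lemma lin_X: "lin (X k) l = (if k = l then 1 else 0)"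
  by (simp add: X_def lin_single lin_single')

lemma yvec_alt: "yvec B k l = (if k = l then 1 else 0) - (if l \<in> {1..<k} then of_int (B l k) / 2 else 0)"
  by (auto simp: yvec_def)

lemma restr:
  fixes g :: "nat \<Rightarrow> 'a::comm_monoid_add"
  assumes "j \<le> n + 1"
  shows "(\<Sum>m\<in>{1..n}. if m \<in> {1..<j} then g m else 0) = (\<Sum>m\<in>{1..<j}. g m)"
proof -
  have e: "{1..n} \<inter> {1..<j} = {1..<j}" using assms by auto
  have "(\<Sum>m\<in>{1..n}. if m \<in> {1..<j} then g m else 0) = sum g ({1..n} \<inter> {1..<j})"
    by (rule sum.inter_restrict[symmetric]) simp
  then show ?thesis unfolding e .
qed

lemma lin_ht: assumes u: "u \<in> H2 n" and l: "ht u < l" shows "lin u l = 0"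
proof (rule ccontr)
  assume ne: "lin u l \<noteq> 0"
  have sub: "{i. lin u i \<noteq> 0} \<subseteq> {1..n}"
  proof
    fix i assume "i \<in> {i. lin u i \<noteq> 0}"
    then have "Poly_Mapping.single i 1 \<in> Poly_Mapping.keys u" by (simp add: lin_def in_keys_iff)
    then show "i \<in> {1..n}" using u unfolding H2_def PolyN_def by fastforce
  qed
  have "finite ({i. lin u i \<noteq> 0} \<union> {0})" using sub by (meson finite.emptyI finite.insertI finite_Un finite_atLeastAtMost finite_subset)
  then have "l \<le> ht u" unfolding ht_def using ne by (intro Max_ge) auto
  then show False using l by simp
qed

theorem lemma4p3:
  fixes n :: nat and A B :: "nat \<Rightarrow> nat \<Rightarrow> int" and f :: "ipoly \<Rightarrow> ipoly"
    and \<sigma> :: "nat \<Rightarrow> nat" and q :: "nat \<Rightarrow> rat"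
    and j k :: nat and a :: int and u :: ipoly
  assumes A: "bott_matrix n A" and B: "bott_matrix n B"
    and psi: "graded_ring_iso n A B f"
    and sigma: "\<sigma> permutes {1..n}"
    and q_nz: "\<forall>i\<in>{1..n}. q i \<noteq> 0"
    and psi_y: "\<forall>i\<in>{1..n}. \<forall>l. psiQ n f (yvec A i) l = q i * yvec B (\<sigma> i) l"
    and j: "j \<in> {1..n}"
    and a: "a \<noteq> 0" and u: "u \<in> H2 n" and k: "k \<in> {1..n}"
    and u_rel: "u * (u + Poly_Mapping.single 0 a * alpha B k) \<in> bott_ideal n B"
    and ht_u: "ht u < k"
  shows
   "(f (X j) - (Poly_Mapping.single 0 a * X k + u) \<in> bott_ideal n B \<and>
     f (X j - alpha A j) - (Poly_Mapping.single 0 a * (X k - alpha B k) - u) \<in> bott_ideal n B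
     \<longrightarrow> q j = of_int a \<and> k = \<sigma> j \<and>
         (\<forall>i\<in>{1..n}. \<sigma> i > \<sigma> j \<longrightarrow> ainv n A i j = 0))
    \<and>
    (f (X j) - (Poly_Mapping.single 0 a * X k + u) \<in> bott_ideal n B \<and>
     f (X j - alpha A j) - (- (Poly_Mapping.single 0 a * (X k - alpha B k)) + u) \<in> bott_ideal n B
     \<longrightarrow> (\<exists>i\<in>{1..<j}. \<forall>l. alphavec A j l = 2 * of_int a / q i * yvec A i l))"
proof -
  interpret isoctx n A B f using psi by unfold_locales
  define Fq where "Fq m l = (of_int (lin (f (X m)) l) :: rat)" for m l
  define S where "S l = (\<Sum>i\<in>{1..<j}. of_int (A i j) * Fq i l)" for l
  define uq where "uq l = (of_int (lin u l) :: rat)" for l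
  define aB where "aB l = (if l \<in> {1..<k} then of_int (B l k) else (0::rat))" for l
  have img: "\<sigma> i \<in> {1..n}" if "i \<in> {1..n}" for i
    using sigma that by (meson permutes_in_image)
  have lin_lc: "psiQ n f (\<lambda>m. \<Sum>i\<in>{1..n}. c i * w i m) l = (\<Sum>i\<in>{1..n}. c i * psiQ n f (w i) l)" for c w l
    unfolding psiQ_def sum_distrib_right sum_distrib_left mult.assoc by (rule sum.swap)
  have sub: "{1..n} \<inter> {1..<j} = {1..<j}" using j by auto
  have psi_yj: "psiQ n f (yvec A j) l = Fq j l - S l / 2" for l
  proof -
    have "psiQ n f (yvec A j) l = (\<Sum>m\<in>{1..n}. (if m = j then Fq m l else 0) - (if m \<in> {1..<j} then of_int (A m j) / 2 * Fq m l else 0))"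
      unfolding psiQ_def Fq_def by (intro sum.cong) (auto simp: yvec_def)
    also have "\<dots> = Fq j l - (\<Sum>m\<in>{1..n}. (if m \<in> {1..<j} then of_int (A m j) / 2 * Fq m l else 0))"
      using j by (simp add: sum_subtractf)
    also have "(\<Sum>m\<in>{1..n}. (if m \<in> {1..<j} then of_int (A m j) / 2 * Fq m l else 0)) = S l / 2"
      unfolding restr[of j n, OF _] S_def sum_divide_distrib using j by (subst restr) (auto intro!: sum.cong)
    finally show ?thesis .
  qed
  have psi_al: "psiQ n f (alphavec A j) l = S l" for l
  proof -
    have "psiQ n f (alphavec A j) l = (\<Sum>m\<in>{1..n}. (if m \<in> {1..<j} then of_int (A m j) * Fq m l else 0))"
      unfolding psiQ_def Fq_def by (intro sum.cong) (auto simp: alphavec_def)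
    also have "\<dots> = S l"
      unfolding S_def using j by (subst restr) auto
    finally show ?thesis .
  qed
  have gXa: "of_int (lin (f (X j - alpha A j)) l) = Fq j l - S l" for l
  proof -
    have "lin (f (X j - alpha A j)) l = lin (f (X j)) l - (\<Sum>i\<in>{1..<j}. A i j * lin (f (X i)) l)"
      using g_diff[OF PolyN_X[OF j] PolyN_alpha[OF j]] g_alpha[OF j] by simp
    then show ?thesis unfolding Fq_def S_def by simp
  qed
  have H1: "Fq j l = (if k = l then of_int a else 0) + uq l"
    if h: "f (X j) - (Poly_Mapping.single 0 a * X k + u) \<in> bott_ideal n B" for l
    using lin_eq[OF h, of l] unfolding Fq_def uq_def by (simp add: lin_add lin_aX)
  have linB: "of_int (lin (Poly_Mapping.single 0 a * (X k - alpha B k)) l) = of_int a * ((if k = l then 1 else 0) - aB l)" for l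
    by (simp add: lin_cmult lin_diff lin_X lin_alpha aB_def)
  have yB: "yvec B k l = (if k = l then 1 else 0) - aB l / 2" for l
    by (simp add: yvec_alt aB_def)
  have aBk: "aB k = 0" by (simp add: aB_def)
  have ycol: "(\<lambda>m. \<Sum>i\<in>{1..n}. ainv n A i j * yvec A i m) = (\<lambda>m. if m = j then 1 else 0)"
    using column[OF A j] by (intro ext) auto
  show ?thesis
  proof (intro conjI impI; elim conjE)
    assume h1: "f (X j) - (Poly_Mapping.single 0 a * X k + u) \<in> bott_ideal n B"
      and h2: "f (X j - alpha A j) - (Poly_Mapping.single 0 a * (X k - alpha B k) - u) \<in> bott_ideal n B"
    have G: "Fq j l - S l = of_int a * ((if k = l then 1 else 0) - aB l) - uq l" for l
      using lin_eq[OF h2, of l] gXa[of l] linB[of l] unfolding uq_def by (simp add: lin_diff)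
    have E: "q j * yvec B (\<sigma> j) l = of_int a * yvec B k l" for l
    proof -
      have "q j * yvec B (\<sigma> j) l = psiQ n f (yvec A j) l" using psi_y j by simp
      also have "\<dots> = Fq j l - S l / 2" by (rule psi_yj)
      also have "\<dots> = of_int a * yvec B k l"
      proof -
        have Sv: "S l = of_int a * aB l + 2 * uq l"
          using G[of l] H1[OF h1, of l] by (cases "k = l") (simp_all add: algebra_simps)
        show ?thesis unfolding yB using Sv H1[OF h1, of l] by (cases "k = l") (simp_all add: algebra_simps)
      qed
      finally show ?thesis .
    qed
    have qj: "q j \<noteq> 0" using q_nz j by simp
    have sj: "\<sigma> j \<in> {1..n}" using img[OF j] .
    have ks: "k = \<sigma> j"
    proof (rule ccontr)
      assume "k \<noteq> \<sigma> j"
      then consider "\<sigma> j < k" | "k < \<sigma> j" by linarith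
      then show False
      proof cases
        case 1
        then show False using E[of k] a by (simp add: yvec_def)
      next
        case 2
        then show False using E[of "\<sigma> j"] qj by (simp add: yvec_def)
      qed
    qed
    have qa: "q j = of_int a" using E[of k] ks by (simp add: yvec_def)
    have zero: "\<forall>i\<in>{1..n}. \<sigma> i > k \<longrightarrow> ainv n A i j * q i = 0"
    proof (rule indep[OF sigma])
      show "\<forall>l. k < l \<and> l \<le> n \<longrightarrow> (\<Sum>i\<in>{1..n}. ainv n A i j * q i * yvec B (\<sigma> i) l) = 0"
      proof (intro allI impI)
        fix l assume l: "k < l \<and> l \<le> n"
        have "(\<Sum>i\<in>{1..n}. ainv n A i j * q i * yvec B (\<sigma> i) l)
            = (\<Sum>i\<in>{1..n}. ainv n A i j * psiQ n f (yvec A i) l)"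
          using psi_y by (intro sum.cong) auto
        also have "\<dots> = psiQ n f (\<lambda>m. if m = j then 1 else 0) l"
          using lin_lc[of "\<lambda>i. ainv n A i j" "yvec A" l] ycol by simp
        also have "\<dots> = Fq j l"
        proof -
          have "psiQ n f (\<lambda>m. if m = j then 1 else 0) l = (\<Sum>m\<in>{1..n}. if m = j then Fq m l else 0)"
            unfolding psiQ_def Fq_def by (intro sum.cong) auto
          then show ?thesis using j by simp
        qed
        also have "\<dots> = 0" using H1[OF h1, of l] l lin_ht[OF u, of l] ht_u unfolding uq_def by simp
        finally show "(\<Sum>i\<in>{1..n}. ainv n A i j * q i * yvec B (\<sigma> i) l) = 0" .
      qed
    qed
    show "q j = of_int a" by (rule qa)
    show "k = \<sigma> j" by (rule ks)
    show "\<forall>i\<in>{1..n}. \<sigma> j < \<sigma> i \<longrightarrow> ainv n A i j = 0"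
      using zero q_nz ks by auto
  next
    assume h1: "f (X j) - (Poly_Mapping.single 0 a * X k + u) \<in> bott_ideal n B"
      and h2: "f (X j - alpha A j) - (- (Poly_Mapping.single 0 a * (X k - alpha B k)) + u) \<in> bott_ideal n B"
    have G: "Fq j l - S l = - (of_int a * ((if k = l then 1 else 0) - aB l)) + uq l" for l
      using lin_eq[OF h2, of l] gXa[of l] linB[of l] unfolding uq_def by (simp add: lin_add lin_uminus lin_diff)
    have Sl: "S l = 2 * of_int a * yvec B k l" for l
      unfolding yB using G[of l] H1[OF h1, of l] aBk by (cases "k = l") (simp_all add: algebra_simps)
    obtain i0 where i0: "i0 \<in> {1..n}" "\<sigma> i0 = k"
      using sigma k by (metis imageE permutes_image)
    define c where "c i = (\<Sum>m\<in>{1..n}. alphavec A j m * ainv n A i m)" for i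
    have supp: "\<forall>l. l \<notin> {1..n} \<longrightarrow> alphavec A j l = 0"
    proof (intro allI impI)
      fix l assume "l \<notin> {1..n}"
      then have "l \<notin> {1..<j}" using j by auto
      then show "alphavec A j l = 0" unfolding alphavec_def by auto
    qed
    have ex: "alphavec A j = (\<lambda>l. \<Sum>i\<in>{1..n}. c i * yvec A i l)"
      unfolding c_def by (intro ext) (rule expand[OF A supp])
    have zero: "\<forall>i\<in>{1..n}. \<sigma> i > 0 \<longrightarrow> c i * q i - (if i = i0 then 2 * of_int a else 0) = 0"
    proof (rule indep[OF sigma])
      show "\<forall>l. 0 < l \<and> l \<le> n \<longrightarrow> (\<Sum>i\<in>{1..n}. (c i * q i - (if i = i0 then 2 * of_int a else 0)) * yvec B (\<sigma> i) l) = 0"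
      proof (intro allI impI)
        fix l assume l: "0 < l \<and> l \<le> n"
        have "(\<Sum>i\<in>{1..n}. (c i * q i - (if i = i0 then 2 * of_int a else 0)) * yvec B (\<sigma> i) l)
            = (\<Sum>i\<in>{1..n}. c i * (q i * yvec B (\<sigma> i) l)) - (\<Sum>i\<in>{1..n}. if i = i0 then 2 * of_int a * yvec B (\<sigma> i) l else 0)"
        proof -
          have "(\<Sum>i\<in>{1..n}. (c i * q i - (if i = i0 then 2 * of_int a else 0)) * yvec B (\<sigma> i) l)
              = (\<Sum>i\<in>{1..n}. c i * (q i * yvec B (\<sigma> i) l) - (if i = i0 then 2 * of_int a * yvec B (\<sigma> i) l else 0))"
            by (intro sum.cong) (auto simp: algebra_simps)
          then show ?thesis by (simp only: sum_subtractf)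
        qed
        also have "(\<Sum>i\<in>{1..n}. if i = i0 then 2 * of_int a * yvec B (\<sigma> i) l else 0) = 2 * of_int a * yvec B k l"
          using i0 by simp
        also have "(\<Sum>i\<in>{1..n}. c i * (q i * yvec B (\<sigma> i) l)) = (\<Sum>i\<in>{1..n}. c i * psiQ n f (yvec A i) l)"
          using psi_y by (intro sum.cong) auto
        also have "\<dots> = psiQ n f (alphavec A j) l"
          using lin_lc[of c "yvec A" l] ex by simp
        also have "\<dots> = 2 * of_int a * yvec B k l" using psi_al Sl by simp
        finally show "(\<Sum>i\<in>{1..n}. (c i * q i - (if i = i0 then 2 * of_int a else 0)) * yvec B (\<sigma> i) l) = 0" by simp
      qed
    qed
    have cval: "c i = (if i = i0 then 2 * of_int a / q i0 else 0)" if i: "i \<in> {1..n}" for i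
    proof -
      have "\<sigma> i > 0" using img[OF i] by auto
      then have "c i * q i = (if i = i0 then 2 * of_int a else 0)" using zero i by auto
      moreover have "q i \<noteq> 0" using q_nz i by auto
      ultimately show ?thesis by (auto simp: field_simps)
    qed
    have alv: "alphavec A j l = 2 * of_int a / q i0 * yvec A i0 l" for l
    proof -
      have "alphavec A j l = (\<Sum>i\<in>{1..n}. c i * yvec A i l)" by (subst ex) simp
      also have "\<dots> = (\<Sum>i\<in>{1..n}. if i = i0 then 2 * of_int a / q i0 * yvec A i0 l else 0)"
        using cval by (intro sum.cong) auto
      also have "\<dots> = 2 * of_int a / q i0 * yvec A i0 l" using i0 by simp
      finally show ?thesis .
    qed
    have "alphavec A j i0 \<noteq> 0" using alv[of i0] a q_nz i0 by (simp add: yvec_def)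
    then have "i0 \<in> {1..<j}" by (simp add: alphavec_def split: if_splits)
    then show "\<exists>i\<in>{1..<j}. \<forall>l. alphavec A j l = 2 * of_int a / q i * yvec A i l"
      using alv by blast
  qed
qed


end
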